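(* Let $k,r\geq 1$, let $1\le d\le r$, and let $I_d\subseteq\{1,\dots,r\}$ with $|I_d|=d$. Then for every $n\geq k$, $$\Bigl|S_n^{(r)}\Bigl(\bigcup_{m=1}^{k}T_{k,r}^m(I_d)\Bigr)\Bigr|=r^{k-1}(r-d)^{n+1-k}\,n!.$$
   Context: For $n,r\ge1$, $S_n^{(r)}$ denotes the set of coloured permutations of length $n$ with $r$ colours: sequences $\phi=(\phi_1,\dots,\phi_n)$ where $\phi_i=a_i^{(c_i)}$, $(a_1,\dots,a_n)$ is a permutation of $\{1,\dots,n\}$ and each $c_i\in\{1,\dots,r\}$ is the colour of $a_i$. For $\phi=(\tau_1^{(s_1)},\dots,\tau_k^{(s_k)})\in S_k^{(r)}$ and $\psi=(\alpha_1^{(v_1)},\dots,\alpha_n^{(v_n)})\in S_n^{(r)}$, an occurrence of $\phi$ in $\psi$ is a sequence of indices $1\le i_1<\dots<i_k\le n$ such that $(\alpha_{i_1},\dots,\alpha_{i_k})$ is order-isomorphic to $(\tau_1,\dots,\tau_k)$ and $v_{i_j}=s_j$ for all $j$. $\psi$ contains $\phi$ if there is at least one occurrence, and avoids $\phi$ otherwise. For a set $T$ of coloured patterns, $S_n^{(r)}(T)$ is the set of $\psi\in S_n^{(r)}$ avoiding every $\phi\in T$. For $I_d\subseteq\{1,\dots,r\}$ with $|I_d|=d$ and $1\le m\le k$, $T_{k,r}^m(I_d)$ is the set of all $\phi\in S_k^{(r)}$ whose first entry is $\phi_1=m^{(c)}$ for some colour $c\in I_d$. *)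

theory Defs
  imports Main
begin

text \<open>A coloured permutation of length n with r colours is a list of pairs (a_i, c_i):
  the first components form a permutation of {1..n}, the colours lie in {1..r}.
  Positions are 0-based list indices.\<close>

definition colperms :: "nat \<Rightarrow> nat \<Rightarrow> (nat \<times> nat) list set" where
  "colperms n r = {xs. length xs = n \<and> distinct (map fst xs) \<and> set (map fst xs) = {1..n}
                      \<and> (\<forall>c \<in> set (map snd xs). 1 \<le> c \<and> c \<le> r)}"

definition occurrence :: "(nat \<times> nat) list \<Rightarrow> (nat \<times> nat) list \<Rightarrow> (nat \<Rightarrow> nat) \<Rightarrow> bool" where
  "occurrence phi psi f \<longleftrightarrow>
     strict_mono_on {0..<length phi} f \<and>
     (\<forall>j < length phi. f j < length psi) \<and>
     (\<forall>i < length phi. \<forall>j < length phi.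
        fst (psi ! f i) < fst (psi ! f j) \<longleftrightarrow> fst (phi ! i) < fst (phi ! j)) \<and>
     (\<forall>j < length phi. snd (psi ! f j) = snd (phi ! j))"

definition contains :: "(nat \<times> nat) list \<Rightarrow> (nat \<times> nat) list \<Rightarrow> bool" where
  "contains psi phi \<longleftrightarrow> (\<exists>f. occurrence phi psi f)"

definition avoiding :: "nat \<Rightarrow> nat \<Rightarrow> (nat \<times> nat) list set \<Rightarrow> (nat \<times> nat) list set" where
  "avoiding n r T = {psi \<in> colperms n r. \<forall>phi \<in> T. \<not> contains psi phi}"

definition Tset :: "nat \<Rightarrow> nat \<Rightarrow> nat \<Rightarrow> nat set \<Rightarrow> (nat \<times> nat) list set" where
  "Tset k r m I = {phi \<in> colperms k r. \<exists>c \<in> I. phi ! 0 = (m, c)}"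

end

theory Submission
  imports Defs "HOL-Combinatorics.Multiset_Permutations"
begin

definition rnk :: "nat set \<Rightarrow> nat \<Rightarrow> nat" where
  "rnk W x = Suc (card {z\<in>W. z < x})"

lemma rnk_less:
  assumes "finite W" "x \<in> W" "y \<in> W" "x < y"
  shows "rnk W x < rnk W y"
proof -
  have "{z\<in>W. z < x} \<subset> {z\<in>W. z < y}" using assms by auto
  then show ?thesis unfolding rnk_def using assms(1) by (simp add: psubset_card_mono)
qed

lemma rnk_iff:
  assumes "finite W" "x \<in> W" "y \<in> W"
  shows "rnk W x < rnk W y \<longleftrightarrow> x < y"
  using rnk_less[OF assms(1)] assms
  by (metis linorder_neq_iff order_less_asym)

lemma rnk_inj: "finite W \<Longrightarrow> inj_on (rnk W) W"
  by (metis inj_onI linorder_neq_iff order_less_irrefl rnk_less)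

lemma rnk_range:
  assumes "finite W" "x \<in> W"
  shows "rnk W x \<in> {1..card W}"
proof -
  have "{z\<in>W. z < x} \<subset> W" using assms by auto
  then have "card {z\<in>W. z < x} < card W" using assms(1) by (simp add: psubset_card_mono)
  then show ?thesis unfolding rnk_def by auto
qed

lemma rnk_image:
  assumes "finite W"
  shows "rnk W ` W = {1..card W}"
proof -
  have sub: "rnk W ` W \<subseteq> {1..card W}" using rnk_range[OF assms] by auto
  have "card (rnk W ` W) = card W" using card_image[OF rnk_inj[OF assms]] .
  then show ?thesis using sub by (simp add: card_subset_eq)
qed

lemma smono_bound:
  fixes f :: "nat \<Rightarrow> nat"
  assumes "strict_mono_on {0..<k} f"
  shows "j < k \<Longrightarrow> f 0 + j \<le> f j"
proof (induction j)
  case 0 then show ?case by simp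
next
  case (Suc j)
  then have "f j < f (Suc j)" using assms(1) by (simp add: strict_mono_on_def)
  then show ?case using Suc by simp
qed

lemma char_avoid:
  assumes k1: "k \<ge> 1" and nk: "n \<ge> k" and I: "I \<subseteq> {1..r}"
  shows "avoiding n r (\<Union>m\<in>{1..k}. Tset k r m I)
    = {psi \<in> colperms n r. \<forall>i < n + 1 - k. snd (psi ! i) \<notin> I}"
proof (intro set_eqI iffI)
  fix psi assume A: "psi \<in> avoiding n r (\<Union>m\<in>{1..k}. Tset k r m I)"
  then have cp: "psi \<in> colperms n r" and av: "\<And>phi. phi \<in> (\<Union>m\<in>{1..k}. Tset k r m I) \<Longrightarrow> \<not> contains psi phi"
    unfolding avoiding_def by auto
  have len: "length psi = n" and dist: "distinct (map fst psi)"
    and col: "\<And>c. c \<in> set (map snd psi) \<Longrightarrow> 1 \<le> c \<and> c \<le> r"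
    using cp unfolding colperms_def by auto
  have "\<forall>i < n + 1 - k. snd (psi ! i) \<notin> I"
  proof (intro allI impI notI)
    fix i assume i: "i < n + 1 - k" and cI: "snd (psi ! i) \<in> I"
    define g where "g = (\<lambda>j. fst (psi ! (i + j)))"
    define W where "W = g ` {0..<k}"
    have fW: "finite W" unfolding W_def by simp
    have ginj: "inj_on g {0..<k}"
    proof (rule inj_onI)
      fix a b assume "a \<in> {0..<k}" "b \<in> {0..<k}" "g a = g b"
      then have "map fst psi ! (i + a) = map fst psi ! (i + b)" "i + a < length (map fst psi)" "i + b < length (map fst psi)"
        using i len nk unfolding g_def by auto
      then show "a = b" using dist nth_eq_iff_index_eq by fastforce
    qed
    have cW: "card W = k" unfolding W_def using card_image[OF ginj] by simp
    define phi where "phi = map (\<lambda>j. (rnk W (g j), snd (psi ! (i + j)))) [0..<k]"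
    have lphi: "length phi = k" unfolding phi_def by simp
    have mf: "map fst phi = map (rnk W \<circ> g) [0..<k]" unfolding phi_def by simp
    have "inj_on (rnk W \<circ> g) {0..<k}"
      using rnk_inj[OF fW] ginj by (simp add: W_def comp_inj_on)
    then have d1: "distinct (map fst phi)" unfolding mf by (simp add: distinct_map)
    have s1: "set (map fst phi) = {1..k}" unfolding mf
      using rnk_image[OF fW] cW by (simp add: W_def image_comp)
    have c1: "\<forall>c \<in> set (map snd phi). 1 \<le> c \<and> c \<le> r"
    proof
      fix c assume "c \<in> set (map snd phi)"
      then obtain j where j: "j < k" "c = snd (psi ! (i + j))" unfolding phi_def by auto
      moreover have "i + j < length psi" using j(1) i len nk by linarith
      ultimately have "c \<in> set (map snd psi)" by (metis length_map nth_map nth_mem)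
      then show "1 \<le> c \<and> c \<le> r" using col by auto
    qed
    have phicp: "phi \<in> colperms k r" unfolding colperms_def using lphi d1 s1 c1 by auto
    have p0: "phi ! 0 = (rnk W (g 0), snd (psi ! i))" unfolding phi_def using k1 by simp
    have m: "rnk W (g 0) \<in> {1..k}" using rnk_range[OF fW, of "g 0"] cW k1 unfolding W_def by auto
    have inT: "phi \<in> (\<Union>m\<in>{1..k}. Tset k r m I)"
      unfolding Tset_def using phicp p0 m cI by auto
    have "occurrence phi psi (\<lambda>j. i + j)"
      unfolding occurrence_def lphi
    proof (intro conjI allI impI)
      show "strict_mono_on {0..<k} ((+) i)" by (simp add: strict_mono_on_def)
    next
      fix j assume "j < k" then show "i + j < length psi" using i len nk by linarith
    next
      fix a b assume ab: "a < k" "b < k"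
      have "g a \<in> W" "g b \<in> W" using ab unfolding W_def by auto
      then show "(fst (psi ! (i + a)) < fst (psi ! (i + b))) = (fst (phi ! a) < fst (phi ! b))"
        using ab rnk_iff[OF fW] unfolding phi_def g_def by simp
    next
      fix j assume "j < k" then show "snd (psi ! (i + j)) = snd (phi ! j)" unfolding phi_def by simp
    qed
    then have "contains psi phi" unfolding contains_def by blast
    then show False using av[OF inT] by simp
  qed
  then show "psi \<in> {psi \<in> colperms n r. \<forall>i < n + 1 - k. snd (psi ! i) \<notin> I}" using cp by simp
next
  fix psi assume B: "psi \<in> {psi \<in> colperms n r. \<forall>i < n + 1 - k. snd (psi ! i) \<notin> I}"
  have "\<not> contains psi phi" if phiT: "phi \<in> (\<Union>m\<in>{1..k}. Tset k r m I)" for phi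
  proof
    assume "contains psi phi"
    then obtain f where f: "occurrence phi psi f" unfolding contains_def by blast
    obtain m c where c: "c \<in> I" "phi ! 0 = (m, c)" and pc: "phi \<in> colperms k r"
      using phiT unfolding Tset_def by auto
    have lphi: "length phi = k" using pc unfolding colperms_def by simp
    have sm: "strict_mono_on {0..<k} f" and lt: "\<And>j. j < k \<Longrightarrow> f j < length psi"
      and cc: "snd (psi ! f 0) = snd (phi ! 0)"
      using f k1 unfolding occurrence_def lphi by auto
    have "f 0 + (k - 1) \<le> f (k - 1)" using smono_bound[OF sm, of "k - 1"] k1 by simp
    moreover have "f (k - 1) < n" using lt[of "k - 1"] k1 B unfolding colperms_def by auto
    ultimately have "f 0 < n + 1 - k" using k1 by linarith
    then have "snd (psi ! f 0) \<notin> I" using B by auto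
    then show False using cc c by simp
  qed
  then show "psi \<in> avoiding n r (\<Union>m\<in>{1..k}. Tset k r m I)" using B unfolding avoiding_def by blast
qed

lemma count_good:
  assumes I: "I \<subseteq> {1..r}" and cI: "card I = d" and k1: "k \<ge> 1" and nk: "n \<ge> k"
  shows "card {psi \<in> colperms n r. \<forall>i < n + 1 - k. snd (psi ! i) \<notin> I}
     = r ^ (k - 1) * (r - d) ^ (n + 1 - k) * fact n"
proof -
  define P where "P = permutations_of_set {1..n}"
  define C1 where "C1 = {xs. set xs \<subseteq> {1..r} - I \<and> length xs = n + 1 - k}"
  define C2 where "C2 = {xs. set xs \<subseteq> {1..r} \<and> length xs = k - 1}"
  define h where "h = (\<lambda>(p::nat list, c1::nat list, c2). zip p (c1 @ c2))"
  have lenP: "\<And>p. p \<in> P \<Longrightarrow> length p = n"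
    unfolding P_def permutations_of_set_def by (metis (mono_tags) distinct_card card_atLeastAtMost diff_Suc_1 mem_Collect_eq)
  have eq: "{psi \<in> colperms n r. \<forall>i < n + 1 - k. snd (psi ! i) \<notin> I} = h ` (P \<times> C1 \<times> C2)"
  proof (intro set_eqI iffI)
    fix psi assume A: "psi \<in> {psi \<in> colperms n r. \<forall>i < n + 1 - k. snd (psi ! i) \<notin> I}"
    have len: "length psi = n" and dist: "distinct (map fst psi)" and st: "set (map fst psi) = {1..n}"
      and col: "\<And>c. c \<in> set (map snd psi) \<Longrightarrow> 1 \<le> c \<and> c \<le> r"
      and good: "\<And>i. i < n + 1 - k \<Longrightarrow> snd (psi ! i) \<notin> I"
      using A unfolding colperms_def by auto
    define c where "c = map snd psi"
    have "map fst psi \<in> P" unfolding P_def permutations_of_set_def using dist st by simp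
    moreover have "take (n + 1 - k) c \<in> C1"
    proof -
      have "set (take (n + 1 - k) c) \<subseteq> {1..r} - I"
      proof
        fix x assume "x \<in> set (take (n + 1 - k) c)"
        then obtain i where i: "i < length (take (n + 1 - k) c)" "x = take (n + 1 - k) c ! i"
          by (metis in_set_conv_nth)
        then have "i < n + 1 - k" "i < n" "x = snd (psi ! i)" unfolding c_def using len by auto
        moreover have "x \<in> set c" using i by (metis in_set_takeD nth_mem)
        ultimately show "x \<in> {1..r} - I" using good col c_def by auto
      qed
      moreover have "length (take (n + 1 - k) c) = n + 1 - k" unfolding c_def using len k1 nk by simp
      ultimately show ?thesis unfolding C1_def by simp
    qed
    moreover have "drop (n + 1 - k) c \<in> C2"
    proof -
      have "set (drop (n + 1 - k) c) \<subseteq> {1..r}" using col c_def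
        by (auto dest: in_set_dropD)
      moreover have "length (drop (n + 1 - k) c) = k - 1" unfolding c_def using len k1 nk by simp
      ultimately show ?thesis unfolding C2_def by simp
    qed
    moreover have "psi = h (map fst psi, take (n + 1 - k) c, drop (n + 1 - k) c)"
      unfolding h_def c_def by (simp add: zip_map_fst_snd)
    ultimately show "psi \<in> h ` (P \<times> C1 \<times> C2)" by blast
  next
    fix psi assume "psi \<in> h ` (P \<times> C1 \<times> C2)"
    then obtain p c1 c2 where p: "p \<in> P" and c1: "c1 \<in> C1" and c2: "c2 \<in> C2" and psi: "psi = zip p (c1 @ c2)"
      unfolding h_def by auto
    have lp: "length p = n" using lenP p .
    have lc: "length (c1 @ c2) = n" using c1 c2 k1 nk unfolding C1_def C2_def by auto
    have mf: "map fst psi = p" using psi lp lc by simp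
    have ms: "map snd psi = c1 @ c2" using psi lp lc by simp
    have "set (c1 @ c2) \<subseteq> {1..r}" using c1 c2 unfolding C1_def C2_def by auto
    then have "\<forall>c \<in> set (map snd psi). 1 \<le> c \<and> c \<le> r" unfolding ms by auto
    moreover have "length psi = n" using psi lp lc by simp
    moreover have "distinct (map fst psi) \<and> set (map fst psi) = {1..n}"
      unfolding mf using p unfolding P_def permutations_of_set_def by simp
    ultimately have "psi \<in> colperms n r" unfolding colperms_def by blast
    moreover have "snd (psi ! i) \<notin> I" if i: "i < n + 1 - k" for i
    proof -
      have il: "i < length c1" using c1 i unfolding C1_def by simp
      have "snd (psi ! i) = (c1 @ c2) ! i" using psi i lp lc il by simp
      also have "\<dots> = c1 ! i" using il by (simp add: nth_append)
      finally show ?thesis using il c1 unfolding C1_def by (metis (mono_tags) DiffD2 mem_Collect_eq nth_mem subsetD)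
    qed
    ultimately show "psi \<in> {psi \<in> colperms n r. \<forall>i < n + 1 - k. snd (psi ! i) \<notin> I}" by simp
  qed
  have inj: "inj_on h (P \<times> C1 \<times> C2)"
  proof (rule inj_onI)
    fix x y assume x: "x \<in> P \<times> C1 \<times> C2" and y: "y \<in> P \<times> C1 \<times> C2" and e: "h x = h y"
    obtain p c1 c2 where xe: "x = (p, c1, c2)" by (cases x) auto
    obtain q d1 d2 where ye: "y = (q, d1, d2)" by (cases y) auto
    have l: "length p = n" "length q = n" "length c1 = n + 1 - k" "length d1 = n + 1 - k"
      "length c2 = k - 1" "length d2 = k - 1"
      using x y lenP unfolding xe ye C1_def C2_def by auto
    have z: "zip p (c1 @ c2) = zip q (d1 @ d2)" using e unfolding h_def xe ye by simp
    have "map fst (zip p (c1 @ c2)) = p" "map snd (zip p (c1 @ c2)) = c1 @ c2"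
      "map fst (zip q (d1 @ d2)) = q" "map snd (zip q (d1 @ d2)) = d1 @ d2"
      using l k1 nk by auto
    then have "p = q" "c1 @ c2 = d1 @ d2" using z by metis+
    then show "x = y" unfolding xe ye using l by simp
  qed
  have fin: "finite ({1..r} - I)" by simp
  have "card ({1..r} - I) = r - d" using I cI by (simp add: card_Diff_subset finite_subset)
  then have cC1: "card C1 = (r - d) ^ (n + 1 - k)" unfolding C1_def using card_lists_length_eq[OF fin] by simp
  have cC2: "card C2 = r ^ (k - 1)" unfolding C2_def using card_lists_length_eq[of "{1..r}"] by simp
  have cP: "card P = fact n" unfolding P_def by simp
  have "card (h ` (P \<times> C1 \<times> C2)) = card P * (card C1 * card C2)"
    using card_image[OF inj] by (simp add: card_cartesian_product)
  then show ?thesis unfolding eq cC1 cC2 cP by simp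
qed

theorem mainTheorem3:
  fixes k r d n :: nat and I :: "nat set"
  assumes "k \<ge> 1" and "r \<ge> 1" and "1 \<le> d" and "d \<le> r"
    and "I \<subseteq> {1..r}" and "card I = d" and "n \<ge> k"
  shows "card (avoiding n r (\<Union>m\<in>{1..k}. Tset k r m I))
           = r ^ (k - 1) * (r - d) ^ (n + 1 - k) * fact n"
  using char_avoid[OF assms(1,7,5)] count_good[OF assms(5,6,1,7)] by simp

end
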